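(* If the indefinite binary quadratic form $(A,B,C)$ over $\mathbb{Q}((1/T))$ is reduced, then the form $(C,B,A)$ is reduced.
   Context: $\mathbb{Q}((1/T))$ is the field of formal Laurent series in $1/T$ over $\mathbb{Q}$; $\deg$ of a nonzero series is the exponent of its leading term, $\deg0=-\infty$. A binary quadratic form $(A,B,C)$ is $AX^2+BXY+CY^2$ with $A,B,C\in\mathbb{Q}((1/T))$ not all in $\mathbb{Q}(T)$, discriminant $D=B^2-4AC$; indefinite means $D\ne0$ is a square in $\mathbb{Q}((1/T))$; a square root $\sqrt D$ is fixed (the same for both forms, which have the same discriminant). If $A\neq0$, the first and second roots are $f=\frac{\sqrt D-B}{2A}$ and $s=\frac{-\sqrt D-B}{2A}$. The form is reduced if $A\ne0$, $f\ne0$ and $\deg f<0<\deg s$. *)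

theory Defs
  imports "HOL-Computational_Algebra.Computational_Algebra" "HOL-Library.Extended_Real"
begin

text \<open>Q((1/T)) is modelled as rat fls, Laurent series in the variable X = 1/T.
  A series sum a_n X^n has T-degree equal to minus its X-subdegree.\<close>

type_synonym laurT = "rat fls"

definition degT :: "laurT \<Rightarrow> ereal" where
  "degT f = (if f = 0 then -\<infinity> else ereal (of_int (- fls_subdegree f)))"

text \<open>Membership in Q(T) = Q(X): f is a quotient of two polynomials.\<close>
definition in_QT :: "laurT \<Rightarrow> bool" where
  "in_QT f \<longleftrightarrow> (\<exists>p q :: rat poly. q \<noteq> 0 \<and>
      f * fps_to_fls (fps_of_poly q) = fps_to_fls (fps_of_poly p))"

definition is_form :: "laurT \<Rightarrow> laurT \<Rightarrow> laurT \<Rightarrow> bool" where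
  "is_form A B C \<longleftrightarrow> \<not> (in_QT A \<and> in_QT B \<and> in_QT C)"

definition disc :: "laurT \<Rightarrow> laurT \<Rightarrow> laurT \<Rightarrow> laurT" where
  "disc A B C = B^2 - 4 * A * C"

definition indefinite :: "laurT \<Rightarrow> laurT \<Rightarrow> laurT \<Rightarrow> bool" where
  "indefinite A B C \<longleftrightarrow> disc A B C \<noteq> 0 \<and> (\<exists>r. r^2 = disc A B C)"

definition first_root :: "laurT \<Rightarrow> laurT \<Rightarrow> laurT \<Rightarrow> laurT" where
  "first_root sqD A B = (sqD - B) / (2 * A)"

definition second_root :: "laurT \<Rightarrow> laurT \<Rightarrow> laurT \<Rightarrow> laurT" where
  "second_root sqD A B = (- sqD - B) / (2 * A)"

definition reduced :: "laurT \<Rightarrow> laurT \<Rightarrow> laurT \<Rightarrow> laurT \<Rightarrow> bool" where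
  "reduced sqD A B C \<longleftrightarrow> A \<noteq> 0 \<and> first_root sqD A B \<noteq> 0 \<and>
     degT (first_root sqD A B) < 0 \<and> 0 < degT (second_root sqD A B)"

end

theory Submission
  imports Defs
begin

lemma degT_inverse:
  fixes x :: laurT
  assumes "x \<noteq> 0"
  shows "degT (inverse x) = - degT x"
  using assms by (simp add: degT_def fls_inverse_subdegree)

theorem proposition10:
  fixes A B C sqD :: laurT
  assumes "is_form A B C"
    and "indefinite A B C"
    and "sqD^2 = disc A B C"
    and "reduced sqD A B C"
  shows "reduced sqD C B A"
proof -
  let ?f = "first_root sqD A B" and ?s = "second_root sqD A B"
  have A0: "A \<noteq> 0" and f0: "?f \<noteq> 0" and df: "degT ?f < 0" and ds: "0 < degT ?s"
    using assms(4) by (auto simp: reduced_def)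
  have s0: "?s \<noteq> 0" using ds by (auto simp: degT_def)
  have two: "(2::laurT) \<noteq> 0" by simp
  have p: "sqD - B \<noteq> 0" using f0 by (auto simp: first_root_def)
  have m: "- sqD - B \<noteq> 0" using s0 by (auto simp: second_root_def)
  have key: "(sqD - B) * (- sqD - B) = 4 * A * C"
  proof -
    have "(sqD - B) * (- sqD - B) = B^2 - sqD^2" by (simp add: algebra_simps power2_eq_square)
    also have "\<dots> = 4 * A * C" using assms(3) by (simp add: disc_def)
    finally show ?thesis .
  qed
  have C0: "C \<noteq> 0"
  proof
    assume "C = 0"
    then have "(sqD - B) * (- sqD - B) = 0" using key by simp
    with p m show False by simp
  qed
  have e1: "first_root sqD C B = inverse ?s"
    unfolding first_root_def second_root_def using C0 A0 m two key
    by (simp add: field_simps, (simp add: algebra_simps)?)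
  have e2: "second_root sqD C B = inverse ?f"
    unfolding first_root_def second_root_def using C0 A0 p two key
    by (simp add: field_simps, (simp add: algebra_simps)?)
  have "degT (inverse ?s) < 0" using degT_inverse[OF s0] ds by (metis ereal_uminus_zero ereal_uminus_less_reorder)
  moreover have "0 < degT (inverse ?f)" using degT_inverse[OF f0] df by (metis ereal_uminus_zero ereal_less_uminus_reorder)
  ultimately show ?thesis using C0 s0 e1 e2 by (simp add: reduced_def)
qed

end
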